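(* Assume the standing hypotheses in the context. For every $(\tau,\xi)\in\mathbb{R}\times\mathbb{R}^n$, the system $$Z'(t)=A(t)Z(t)+f(t,Y(t,\tau,\xi)+Z(t))$$ has a unique solution $g(t,(\tau,\xi))$ that is bounded on $\mathbb{R}$, and $\|g(t,(\tau,\xi))\|\le 2K\beta\alpha^{-1}$ for all $t\in\mathbb{R}$.
   Context: Standing hypotheses: $A:\mathbb{R}\to\mathbb{R}^{n\times n}$ is continuous and bounded, $T(t,s)$ is the evolution operator of $x'=A(t)x$. $\mu:\mathbb{R}\to(0,\infty)$ is an increasing differentiable growth rate: $\mu(0)=1$, $\lim_{t\to-\infty}\mu(t)=0$, $\lim_{t\to+\infty}\mu(t)=+\infty$. The system $x'=A(t)x$ admits an algebraic dichotomy: projections $P(s)$, $Q(s)=I-P(s)$, constants $K,\alpha>0$ with $T(t,s)P(s)=P(t)T(t,s)$, $\|T(t,s)P(s)\|\le K(\mu(t)/\mu(s))^{-\alpha}$ ($t\ge s$), $\|T(t,s)Q(s)\|\le K(\mu(s)/\mu(t))^{-\alpha}$ ($t\le s$). $f:\mathbb{R}\times\mathbb{R}^n\to\mathbb{R}^n$ is continuous, $\|f(t,x)\|\le\beta\mu'(t)\mu^{-1}(t)$, $\|f(t,x_1)-f(t,x_2)\|\le\gamma\mu'(t)\mu^{-1}(t)\|x_1-x_2\|$ for constants $\beta,\gamma\ge0$, and $6K\gamma\alpha^{-1}<1$. $Y(t,\tau,\xi)$ denotes the solution of $x'=A(t)x$ with $Y(\tau)=\xi$. *)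

theory Defs
  imports "HOL-Analysis.Analysis"
begin

definition opnorm :: "real^'n^'n \<Rightarrow> real" where
  "opnorm M = onorm (\<lambda>x. M *v x)"

end

theory Submission
  imports Defs
begin



lemma mv_norm:
  fixes M :: "real^'n^'m"
  shows "norm (M *v x) \<le> real CARD('m) * real CARD('n) * norm M * norm x"
proof -
  have on: "onorm ((*v) M) \<le> real CARD('m) * real CARD('n) * norm M"
    proof (rule onorm_le_matrix_component)
    fix i j
    have "\<bar>M $ i $ j\<bar> \<le> norm (M $ i)" by (rule component_le_norm_cart)
    also have "\<dots> \<le> norm M" by (rule Finite_Cartesian_Product.norm_nth_le)
    finally show "\<bar>M $ i $ j\<bar> \<le> norm M" .
  qed
  moreover have "norm (M *v x) \<le> onorm ((*v) M) * norm x"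
    by (rule onorm) simp
  ultimately show ?thesis
    using mult_right_mono[OF on norm_ge_zero[of x]] by linarith
qed

lemma bb_mv: "bounded_bilinear (\<lambda>(M::real^'n^'m) (x::real^'n). M *v x)"
proof
  fix a a' :: "real^'n^'m" and b b' :: "real^'n" and r :: real
  show "(a + a') *v b = a *v b + a' *v b" by (rule matrix_vector_mult_add_rdistrib)
  show "a *v (b + b') = a *v b + a *v b'" by (rule matrix_vector_right_distrib)
  show "(r *\<^sub>R a) *v b = r *\<^sub>R (a *v b)" by (rule scaleR_matrix_vector_assoc[symmetric])
  show "a *v (r *\<^sub>R b) = r *\<^sub>R (a *v b)" by (rule matrix_vector_mult_scaleR)
next
  show "\<exists>K. \<forall>a b. norm ((a::real^'n^'m) *v b) \<le> norm a * norm b * K"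
  proof (intro exI allI)
    fix a :: "real^'n^'m" and b :: "real^'n"
    show "norm (a *v b) \<le> norm a * norm b * (real CARD('m) * real CARD('n))"
      using mv_norm[of a b] by (simp only: mult_ac)
  qed
qed



lemma mono_deriv_nonneg:
  fixes g :: "real \<Rightarrow> real"
  assumes "mono g" "(g has_real_derivative D) (at x)"
  shows "D \<ge> 0"
proof (rule ccontr)
  assume "\<not> D \<ge> 0"
  then obtain d where "d > 0" "\<forall>h>0. h < d \<longrightarrow> g x > g (x + h)"
    using DERIV_neg_dec_right[OF assms(2)] by force
  then have "g x > g (x + d/2)" by auto
  moreover have "g x \<le> g (x + d/2)" using assms(1) \<open>d > 0\<close> by (simp add: monoD)
  ultimately show False by simp
qed

lemma ftc_to_inf:
  fixes w W :: "real \<Rightarrow> real"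
  assumes der: "\<And>x. (W has_real_derivative w x) (at x)"
    and nonneg: "\<And>x. x \<ge> a \<Longrightarrow> w x \<ge> 0"
    and lim: "(W \<longlongrightarrow> L) at_top"
  shows "(w has_integral (L - W a)) {a..}"
proof (rule has_integral_to_inf)
  have ftc: "(w has_integral (W y - W a)) {a..y}" if "a \<le> y" for y
    using that by (intro fundamental_theorem_of_calculus)
      (auto intro: has_field_derivative_at_within der simp: has_real_derivative_iff_has_vector_derivative[symmetric])
  show "w integrable_on {a..y}" for y
    by (cases "a \<le> y") (use ftc in auto)
  have "\<forall>\<^sub>F y in at_top. W y - W a = integral {a..y} w"
    using eventually_ge_at_top[of a] by eventually_elim (metis ftc integral_unique)
  moreover have "((\<lambda>y. W y - W a) \<longlongrightarrow> L - W a) at_top"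
    by (intro tendsto_intros lim)
  ultimately show "((\<lambda>y. integral {a..y} w) \<longlongrightarrow> L - W a) at_top"
    by (rule Lim_transform_eventually[rotated]) 
  show "y \<ge> a \<Longrightarrow> w y \<ge> 0" for y using nonneg by auto
qed




lemma ftc_to_minf:
  fixes w W :: "real \<Rightarrow> real"
  assumes der: "\<And>x. (W has_real_derivative w x) (at x)"
    and nonneg: "\<And>x. x \<le> a \<Longrightarrow> w x \<ge> 0"
    and lim: "(W \<longlongrightarrow> L) at_bot"
  shows "(w has_integral (W a - L)) {..a}"
proof -
  have ftc: "(w has_integral (W a - W y)) {y..a}" if "y \<le> a" for y
    using that by (intro fundamental_theorem_of_calculus)
      (auto intro: has_field_derivative_at_within der simp: has_real_derivative_iff_has_vector_derivative[symmetric])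
  have int: "w integrable_on {y..a}" for y
    by (cases "y \<le> a") (use ftc in auto)
  have limI: "((\<lambda>y. integral {y..a} w) \<longlongrightarrow> W a - L) at_bot"
  proof -
    have "\<forall>\<^sub>F y in at_bot. W a - W y = integral {y..a} w"
      using eventually_le_at_bot[of a] by eventually_elim (metis ftc integral_unique)
    moreover have "((\<lambda>y. W a - W y) \<longlongrightarrow> W a - L) at_bot"
      by (intro tendsto_intros lim)
    ultimately show ?thesis
      by (rule Lim_transform_eventually[rotated])
  qed
  define l where "l = W a - L"
  have ge: "integral {y..a} w \<ge> 0" for y
    by (meson Henstock_Kurzweil_Integration.integral_nonneg atLeastAtMost_iff int nonneg)
  have anti: "integral {y..a} w \<le> integral {z..a} w" if "z \<le> y" for y z
    using that by (intro integral_subset_le) (auto simp: int nonneg)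
  have int_le_l: "integral {y..a} w \<le> l" for y
  proof (rule tendsto_lowerbound[OF limI[folded l_def]])
    show "\<forall>\<^sub>F x in at_bot. integral {y..a} w \<le> integral {x..a} w"
      using eventually_le_at_bot[of y] by eventually_elim (rule anti)
  qed simp
  have "0 \<le> l" using ge[of a] int_le_l[of a] by linarith
  define f where "f \<equiv> \<lambda>n x. if x \<in> {a - real n..a} then w x else 0"
  have has_integral_f: "(f n has_integral (integral {a - real n..a} w)) {..a}" for n
    unfolding f_def
    by (subst has_integral_restrict) (auto intro: integrable_integral int)
  have *: "w integrable_on {..a} \<and> (\<lambda>n. integral {..a} (f n)) \<longlonglongrightarrow> integral {..a} w"
  proof (intro monotone_convergence_increasing allI ballI)
    fix n
    show "f n integrable_on {..a}"
      using has_integral_f by blast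
  next
    fix n x
    show "f n x \<le> f (Suc n) x" using nonneg by (auto simp: f_def)
  next
    fix x :: real assume x: "x \<in> {..a}"
    have "eventually (\<lambda>n. real n \<ge> a - x) at_top"
      by (meson eventually_sequentiallyI nat_ceiling_le_eq)
    with x have "eventually (\<lambda>n. f n x = w x) at_top"
      by (auto simp: eventually_mono f_def)
    thus "(\<lambda>n. f n x) \<longlonglongrightarrow> w x" by (simp add: tendsto_eventually)
  next
    have "norm (integral {..a} (f n)) \<le> l" for n
      using has_integral_f[of n] ge int_le_l by (simp add: integral_unique)
    thus "bounded (range(\<lambda>k. integral {..a} (f k)))"
      by (metis (no_types, lifting) boundedI rangeE)
  qed
  have "filterlim (\<lambda>n. a - real n) at_bot sequentially"
  proof (subst filterlim_at_bot, intro allI)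
    fix Z :: real
    show "\<forall>\<^sub>F n in sequentially. a - real n \<le> Z"
      unfolding eventually_sequentially
      by (rule exI[of _ "nat \<lceil>a - Z\<rceil>"]) (auto simp: nat_ceiling_le_eq)
  qed
  then have "((\<lambda>n. integral {a - real n..a} w) \<longlongrightarrow> l) sequentially"
    using limI[folded l_def] by (rule filterlim_compose[of _ _ at_bot, rotated])
  moreover have "integral {..a} (f n) = integral {a - real n..a} w" for n
    using has_integral_f[of n] by (rule integral_unique)
  ultimately have "(\<lambda>n. integral {..a} (f n)) \<longlonglongrightarrow> l"
    by simp
  moreover have "(\<lambda>n. integral {..a} (f n)) \<longlonglongrightarrow> integral {..a} w"
    using * by blast
  ultimately have "integral {..a} w = l"
    by (rule LIMSEQ_unique[rotated])
  moreover have "w integrable_on {..a}" using * by blast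
  ultimately show ?thesis
    unfolding l_def by (simp add: has_integral_iff)
qed





locale dich =
  fixes A :: "real \<Rightarrow> real^'n^'n"
    and T :: "real \<Rightarrow> real \<Rightarrow> real^'n^'n"
    and P :: "real \<Rightarrow> real^'n^'n"
    and mu mu' :: "real \<Rightarrow> real"
    and K \<alpha> :: real
  assumes A_bdd: "bounded (range A)"
    and T_id: "\<And>s. T s s = mat 1"
    and T_deriv: "\<And>t s. ((\<lambda>t. T t s) has_vector_derivative (A t ** T t s)) (at t)"
    and mu_pos: "\<And>t. mu t > 0"
    and mu_mono: "mono mu"
    and mu_deriv: "\<And>t. (mu has_real_derivative mu' t) (at t)"
    and mu_0: "mu 0 = 1"
    and mu_bot: "(mu \<longlongrightarrow> 0) at_bot"
    and mu_top: "filterlim mu at_top at_top"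
    and K_pos: "K > 0" and alpha_pos: "\<alpha> > 0"
    and P_comm: "\<And>t s. T t s ** P s = P t ** T t s"
    and dich_P: "\<And>t s. t \<ge> s \<Longrightarrow> opnorm (T t s ** P s) \<le> K * (mu t / mu s) powr (-\<alpha>)"
    and dich_Q: "\<And>t s. t \<le> s \<Longrightarrow> opnorm (T t s ** (mat 1 - P s)) \<le> K * (mu s / mu t) powr (-\<alpha>)"
begin

definition MA where "MA = real CARD('n) * real CARD('n) * (SUP t. norm (A t)) + 1"

lemma MA_facts: "MA > 0" "\<And>t x. norm (A t *v x) \<le> MA * norm x"
proof -
  have bdd: "bdd_above (range (\<lambda>t. norm (A t)))"
    using A_bdd by (auto simp: bounded_iff bdd_above_def)
  have le: "norm (A t) \<le> (SUP t. norm (A t))" for t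
    by (rule cSUP_upper[OF UNIV_I bdd])
  have S0: "(SUP t. norm (A t)) \<ge> 0" using le[of 0] norm_ge_zero[of "A 0"] by linarith
  show "MA > 0" unfolding MA_def using S0 by (simp add: add_nonneg_pos)
  fix t x
  have "norm (A t *v x) \<le> real CARD('n) * real CARD('n) * norm (A t) * norm x"
    by (rule mv_norm)
  also have "\<dots> \<le> real CARD('n) * real CARD('n) * (SUP t. norm (A t)) * norm x"
    by (intro mult_right_mono mult_left_mono le) auto
  also have "\<dots> \<le> MA * norm x"
    unfolding MA_def by (simp add: distrib_right)
  finally show "norm (A t *v x) \<le> MA * norm x" .
qed

definition hsol :: "(real \<Rightarrow> real^'n) \<Rightarrow> bool" where
  "hsol x \<longleftrightarrow> (\<forall>t. (x has_vector_derivative A t *v x t) (at t))"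

lemma bl_left: "bounded_linear (\<lambda>M::real^'n^'n. M *v v)"
  by (rule bounded_bilinear.bounded_linear_left[OF bb_mv])

lemma Tv_sol: "hsol (\<lambda>t. T t s *v v)"
  unfolding hsol_def
proof
  fix t
  show "((\<lambda>t. T t s *v v) has_vector_derivative A t *v (T t s *v v)) (at t)"
    using bounded_linear.has_vector_derivative[OF bl_left T_deriv[of s t]]
    by (simp add: matrix_vector_mul_assoc)
qed

lemma hsol_diff: "hsol x \<Longrightarrow> hsol y \<Longrightarrow> hsol (\<lambda>t. x t - y t)"
  unfolding hsol_def by (auto intro!: has_vector_derivative_diff simp: matrix_vector_mult_diff_distrib)

lemma energy_deriv:
  assumes "hsol x"
  shows "((\<lambda>u. exp (c*u) * (x u \<bullet> x u)) has_real_derivative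
          exp (c*u) * (c * (x u \<bullet> x u) + 2 * (x u \<bullet> (A u *v x u)))) (at u)"
proof -
  have xd: "(x has_vector_derivative A u *v x u) (at u)" using assms unfolding hsol_def by blast
  have "((\<lambda>u. x u \<bullet> x u) has_vector_derivative (x u \<bullet> (A u *v x u) + (A u *v x u) \<bullet> x u)) (at u)"
    by (rule bounded_bilinear.has_vector_derivative[OF bounded_bilinear_inner xd xd])
  then have i: "((\<lambda>u. x u \<bullet> x u) has_real_derivative 2 * (x u \<bullet> (A u *v x u))) (at u)"
    by (simp add: has_real_derivative_iff_has_vector_derivative inner_commute)
  have e: "((\<lambda>u. exp (c*u)) has_real_derivative exp (c*u) * c) (at u)"
    by (auto intro!: derivative_eq_intros)
  show ?thesis
    using DERIV_mult[OF e i] by (simp add: algebra_simps)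
qed

lemma inner_A_bound: "\<bar>y \<bullet> (A u *v y)\<bar> \<le> MA * (y \<bullet> y)"
proof -
  have "\<bar>y \<bullet> (A u *v y)\<bar> \<le> norm y * norm (A u *v y)" by (rule Cauchy_Schwarz_ineq2)
  also have "\<dots> \<le> norm y * (MA * norm y)" by (intro mult_left_mono MA_facts) simp
  also have "\<dots> = MA * (y \<bullet> y)" by (simp add: power2_norm_eq_inner[symmetric] power2_eq_square)
  finally show ?thesis .
qed

lemma exp_sq: "(a::real) + b = 2 * c \<Longrightarrow> exp a * exp b = (exp c)^2"
proof -
  assume h: "a + b = 2 * c"
  have "exp a * exp b = exp (a + b)" by (rule exp_add[symmetric])
  also have "\<dots> = exp (c + c)" using h by simp
  also have "\<dots> = (exp c)^2" by (simp only: exp_add power2_eq_square)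
  finally show ?thesis .
qed

lemma growth_fwd:
  assumes "hsol x" "s \<le> t"
  shows "norm (x t) \<le> exp (MA * (t - s)) * norm (x s)"
proof -
  define phi where "phi = (\<lambda>u. exp ((-2*MA) * u) * (x u \<bullet> x u))"
  have "phi t \<le> phi s"
  proof (rule DERIV_nonpos_imp_nonincreasing[OF assms(2)])
    fix u
    have "exp ((-2*MA) * u) * ((-2*MA) * (x u \<bullet> x u) + 2 * (x u \<bullet> (A u *v x u))) \<le> 0"
      using inner_A_bound[of "x u" u] by (intro mult_nonneg_nonpos) auto
    then show "\<exists>y. DERIV phi u :> y \<and> y \<le> 0"
      using energy_deriv[OF assms(1)] unfolding phi_def by blast
  qed
  then have "exp (2*MA*t) * (exp ((-2*MA) * t) * (x t \<bullet> x t)) \<le> exp (2*MA*t) * (exp ((-2*MA) * s) * (x s \<bullet> x s))"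
    unfolding phi_def by (intro mult_left_mono) auto
  also have "exp (2*MA*t) * (exp ((-2*MA) * t) * (x t \<bullet> x t)) = (exp (2*MA*t) * exp ((-2*MA) * t)) * (x t \<bullet> x t)"
    by (simp only: mult.assoc)
  also have "exp (2*MA*t) * exp ((-2*MA) * t) = exp 0 ^ 2"
    by (rule exp_sq) simp
  also have "exp (2*MA*t) * (exp ((-2*MA) * s) * (x s \<bullet> x s)) = (exp (2*MA*t) * exp ((-2*MA) * s)) * (x s \<bullet> x s)"
    by (simp only: mult.assoc)
  also have "exp (2*MA*t) * exp ((-2*MA) * s) = exp (MA * (t - s)) ^ 2"
    by (rule exp_sq) (simp add: algebra_simps)
  finally have "(norm (x t))^2 \<le> (exp (MA * (t - s)) * norm (x s))^2"
    by (simp add: power2_norm_eq_inner power_mult_distrib)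
  then show ?thesis
    by (rule power2_le_imp_le) simp
qed

lemma growth_bwd:
  assumes "hsol x" "t \<le> s"
  shows "norm (x t) \<le> exp (MA * (s - t)) * norm (x s)"
proof -
  define phi where "phi = (\<lambda>u. exp ((2*MA) * u) * (x u \<bullet> x u))"
  have "phi t \<le> phi s"
  proof (rule DERIV_nonneg_imp_nondecreasing[OF assms(2)])
    fix u
    have "exp ((2*MA) * u) * ((2*MA) * (x u \<bullet> x u) + 2 * (x u \<bullet> (A u *v x u))) \<ge> 0"
      using inner_A_bound[of "x u" u] by (intro mult_nonneg_nonneg) auto
    then show "\<exists>y. DERIV phi u :> y \<and> y \<ge> 0"
      using energy_deriv[OF assms(1)] unfolding phi_def by blast
  qed
  then have "exp ((-2*MA) * t) * (exp ((2*MA) * t) * (x t \<bullet> x t)) \<le> exp ((-2*MA) * t) * (exp ((2*MA) * s) * (x s \<bullet> x s))"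
    unfolding phi_def by (intro mult_left_mono) auto
  also have "exp ((-2*MA) * t) * (exp ((2*MA) * t) * (x t \<bullet> x t)) = (exp ((-2*MA) * t) * exp ((2*MA) * t)) * (x t \<bullet> x t)"
    by (simp only: mult.assoc)
  also have "exp ((-2*MA) * t) * exp ((2*MA) * t) = exp 0 ^ 2"
    by (rule exp_sq) simp
  also have "exp ((-2*MA) * t) * (exp ((2*MA) * s) * (x s \<bullet> x s)) = (exp ((-2*MA) * t) * exp ((2*MA) * s)) * (x s \<bullet> x s)"
    by (simp only: mult.assoc)
  also have "exp ((-2*MA) * t) * exp ((2*MA) * s) = exp (MA * (s - t)) ^ 2"
    by (rule exp_sq) (simp add: algebra_simps)
  finally have "(norm (x t))^2 \<le> (exp (MA * (s - t)) * norm (x s))^2"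
    by (simp add: power2_norm_eq_inner power_mult_distrib)
  then show ?thesis
    by (rule power2_le_imp_le) simp
qed

lemma growth: "hsol x \<Longrightarrow> norm (x t) \<le> exp (MA * \<bar>t - s\<bar>) * norm (x s)"
  by (cases "s \<le> t") (auto dest: growth_fwd[of x s t] growth_bwd[of x t s])

lemma hsol_zero: "hsol x \<Longrightarrow> x s = 0 \<Longrightarrow> x t = 0"
  using growth[of x t s] by simp

lemma cocycle: "T t s *v (T s r *v v) = T t r *v v"
proof -
  have "hsol (\<lambda>t. T t s *v (T s r *v v) - T t r *v v)"
    by (intro hsol_diff Tv_sol)
  moreover have "T s s *v (T s r *v v) - T s r *v v = 0" by (simp add: T_id)
  ultimately show ?thesis using hsol_zero by fastforce
qed

lemma T_bound: "norm (T t s *v v) \<le> exp (MA * \<bar>t - s\<bar>) * norm v"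
  using growth[of "\<lambda>t. T t s *v v" t s] Tv_sol by (simp add: T_id)

end



context dich begin

lemma Tcont_fixed: "isCont (\<lambda>t. T t s *v v) t"
  using Tv_sol[of s v] unfolding hsol_def
  by (meson has_vector_derivative_continuous)

lemma Tcont0: "continuous_on UNIV (\<lambda>s. T 0 s *v v)"
proof (rule continuous_at_imp_continuous_on, intro ballI)
  fix s0 :: real
  let ?g = "\<lambda>s. exp (MA * \<bar>0 - s\<bar>) * norm (v - T s s0 *v v)"
  have "((\<lambda>s. T 0 s *v v - T 0 s0 *v v) \<longlongrightarrow> 0) (at s0)"
  proof (rule Lim_null_comparison)
    show "\<forall>\<^sub>F s in at s0. norm (T 0 s *v v - T 0 s0 *v v) \<le> ?g s"
    proof (rule always_eventually, intro allI)
      fix s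
      have "T 0 s *v v - T 0 s0 *v v = T 0 s *v (v - T s s0 *v v)"
        by (simp add: matrix_vector_mult_diff_distrib cocycle)
      then show "norm (T 0 s *v v - T 0 s0 *v v) \<le> ?g s"
        using T_bound[of 0 s "v - T s s0 *v v"] by simp
    qed
    have "isCont ?g s0" by (intro continuous_intros Tcont_fixed)
    then show "(?g \<longlongrightarrow> 0) (at s0)"
      unfolding isCont_def by (simp add: T_id)
  qed
  then show "isCont (\<lambda>s. T 0 s *v v) s0"
    unfolding isCont_def by (rule LIM_zero_cancel)
qed

lemma Tcont: "continuous_on UNIV (\<lambda>s. T t s *v v)"
proof -
  have "continuous_on UNIV (\<lambda>s. T t 0 *v (T 0 s *v v))"
    by (rule bounded_linear.continuous_on[OF matrix_vector_mul_bounded_linear Tcont0])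
  then show ?thesis by (simp add: cocycle)
qed

lemma Tmat_cont: "continuous_on UNIV (\<lambda>s. T 0 s)"
proof -
  have eq: "T 0 s = (\<chi> i j. (T 0 s *v axis j 1) $ i)" for s
    by (simp add: vec_eq_iff matrix_vector_mult_basis column_def)
  have "continuous_on UNIV (\<lambda>s. (\<chi> i j. (T 0 s *v axis j 1) $ i))"
    by (intro continuous_on_vec_lambda continuous_on_component Tcont0)
  then show ?thesis by (subst eq) simp
qed

lemma Tv_cont: "continuous_on UNIV F \<Longrightarrow> continuous_on UNIV (\<lambda>s. T 0 s *v F s)"
  using bounded_bilinear.continuous_on[OF bb_mv Tmat_cont] by simp

lemma P_rel: "T 0 s *v (P s *v u) = P 0 *v (T 0 s *v u)"
  using arg_cong[OF P_comm[of 0 s], of "\<lambda>M. M *v u"] by (simp add: matrix_vector_mul_assoc)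

lemma Q_rel: "T 0 s *v ((mat 1 - P s) *v u) = (mat 1 - P 0) *v (T 0 s *v u)"
  by (simp add: matrix_vector_mult_diff_rdistrib matrix_vector_mult_diff_distrib P_rel)

lemma opn: "norm (M *v u) \<le> opnorm M * norm u"
  unfolding opnorm_def by (rule onorm[OF matrix_vector_mul_bounded_linear])

lemma mu'_nn: "mu' s \<ge> 0"
  by (rule mono_deriv_nonneg[OF mu_mono mu_deriv])

definition wP where "wP s = mu s powr (\<alpha> - 1) * mu' s"
definition wQ where "wQ s = mu s powr (- \<alpha> - 1) * mu' s"

lemma wP_nn: "wP s \<ge> 0" unfolding wP_def using mu'_nn by simp
lemma wQ_nn: "wQ s \<ge> 0" unfolding wQ_def using mu'_nn by simp

lemma mu_powr_deriv: "((\<lambda>s. mu s powr a) has_real_derivative (a * mu s powr (a - 1)) * mu' s) (at s)"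
  by (rule DERIV_chain2[OF has_real_derivative_powr[OF mu_pos] mu_deriv])

lemma lim_bot: "((\<lambda>s. mu s powr \<alpha>) \<longlongrightarrow> 0) at_bot"
  using mu_pos by (intro tendsto_zero_powrI[OF mu_bot tendsto_const] alpha_pos) (auto intro: always_eventually less_imp_le)

lemma lim_top: "((\<lambda>s. mu s powr (-\<alpha>)) \<longlongrightarrow> 0) at_top"
proof -
  have "((\<lambda>s. inverse (mu s) powr \<alpha>) \<longlongrightarrow> 0) at_top"
    using mu_pos by (intro tendsto_zero_powrI[OF tendsto_inverse_0_at_top[OF mu_top] tendsto_const] alpha_pos)
      (auto intro: always_eventually less_imp_le)
  then show ?thesis by (simp add: inverse_powr powr_minus)
qed

lemma intP: "(wP has_integral (mu t powr \<alpha> / \<alpha>)) {..t}"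
proof -
  have "(wP has_integral (mu t powr \<alpha> / \<alpha> - 0)) {..t}"
  proof (rule ftc_to_minf)
    show "((\<lambda>s. mu s powr \<alpha> / \<alpha>) has_real_derivative wP x) (at x)" for x
      using DERIV_cdivide[OF mu_powr_deriv[of \<alpha> x], of \<alpha>] alpha_pos unfolding wP_def by simp
    show "0 \<le> wP x" for x by (rule wP_nn)
    show "((\<lambda>s. mu s powr \<alpha> / \<alpha>) \<longlongrightarrow> 0) at_bot"
      using tendsto_divide_zero[OF lim_bot] by simp
  qed
  then show ?thesis by simp
qed

lemma intQ: "(wQ has_integral (mu t powr (-\<alpha>) / \<alpha>)) {t..}"
proof -
  have "(wQ has_integral (0 - (- (mu t powr (-\<alpha>)) / \<alpha>))) {t..}"
  proof (rule ftc_to_inf)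
    show "((\<lambda>s. - (mu s powr (-\<alpha>)) / \<alpha>) has_real_derivative wQ x) (at x)" for x
      using DERIV_cdivide[OF DERIV_minus[OF mu_powr_deriv[of "-\<alpha>" x]], of \<alpha>] alpha_pos unfolding wQ_def by simp
    show "0 \<le> wQ x" for x by (rule wQ_nn)
    show "((\<lambda>s. - (mu s powr (-\<alpha>)) / \<alpha>) \<longlongrightarrow> 0) at_top"
      using tendsto_divide_zero[OF tendsto_minus[OF lim_top, simplified]] by simp
  qed
  then show ?thesis by simp
qed

lemma wP_eq: "(mu t / mu s) powr (-\<alpha>) * (mu' s / mu s) = mu t powr (-\<alpha>) * wP s"
  using mu_pos[of s] mu_pos[of t] unfolding wP_def
  by (simp add: powr_divide powr_minus powr_diff field_simps)

lemma wQ_eq: "(mu s / mu t) powr (-\<alpha>) * (mu' s / mu s) = mu t powr \<alpha> * wQ s"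
  using mu_pos[of s] mu_pos[of t] unfolding wQ_def
  by (simp add: powr_divide powr_minus powr_diff powr_add field_simps)

end



lemma split_lower:
  fixes k :: "real \<Rightarrow> 'a::euclidean_space"
  assumes cont: "continuous_on UNIV k" and int: "k integrable_on {..a}" and "a \<le> u"
  shows "integral {..u} k = integral {..a} k + integral {a..u} k"
proof -
  have ia: "k integrable_on {a..u}"
    by (rule integrable_continuous_interval[OF continuous_on_subset[OF cont]]) simp
  have "(k has_integral (integral {..a} k + integral {a..u} k)) ({..a} \<union> {a..u})"
  proof (rule has_integral_Un)
    show "(k has_integral integral {..a} k) {..a}" using int by (rule integrable_integral)
    show "(k has_integral integral {a..u} k) {a..u}" using ia by (rule integrable_integral)
    show "negligible ({..a} \<inter> {a..u})"
      by (rule negligible_subset[OF negligible_sing[of a]]) auto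
  qed
  moreover have "{..a} \<union> {a..u} = {..u}" using assms(3) by auto
  ultimately show ?thesis by (simp add: integral_unique)
qed

lemma split_upper:
  fixes k :: "real \<Rightarrow> 'a::euclidean_space"
  assumes cont: "continuous_on UNIV k" and int: "k integrable_on {b..}" and "u \<le> b"
  shows "integral {u..} k = integral {u..b} k + integral {b..} k"
proof -
  have ia: "k integrable_on {u..b}"
    by (rule integrable_continuous_interval[OF continuous_on_subset[OF cont]]) simp
  have "(k has_integral (integral {u..b} k + integral {b..} k)) ({u..b} \<union> {b..})"
  proof (rule has_integral_Un)
    show "(k has_integral integral {b..} k) {b..}" using int by (rule integrable_integral)
    show "(k has_integral integral {u..b} k) {u..b}" using ia by (rule integrable_integral)
    show "negligible ({u..b} \<inter> {b..})"
      by (rule negligible_subset[OF negligible_sing[of b]]) auto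
  qed
  moreover have "{u..b} \<union> {b..} = {u..}" using assms(3) by auto
  ultimately show ?thesis by (simp add: integral_unique)
qed

lemma IP_deriv:
  fixes k :: "real \<Rightarrow> 'a::euclidean_space"
  assumes cont: "continuous_on UNIV k" and int: "\<And>u. k integrable_on {..u}"
  shows "((\<lambda>u. integral {..u} k) has_vector_derivative k t) (at t)"
proof -
  define a where "a = t - 1"
  define b where "b = t + 1"
  have at: "at t within {a..b} = at t" by (rule at_within_Icc_at) (auto simp: a_def b_def)
  have "((\<lambda>u. integral {a..u} k) has_vector_derivative k t) (at t within {a..b})"
    by (rule integral_has_vector_derivative[OF continuous_on_subset[OF cont]]) (auto simp: a_def b_def)
  then have "((\<lambda>u. integral {..a} k + integral {a..u} k) has_vector_derivative k t) (at t)"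
    unfolding at using has_vector_derivative_add[OF has_vector_derivative_const] by fastforce
  then show ?thesis
  proof (rule has_vector_derivative_transform_within_open)
    show "open {a<..<b}" by simp
    show "t \<in> {a<..<b}" by (auto simp: a_def b_def)
    show "integral {..a} k + integral {a..y} k = integral {..y} k" if "y \<in> {a<..<b}" for y
      using split_lower[OF cont int, of a y] that by simp
  qed
qed

lemma IQ_deriv:
  fixes k :: "real \<Rightarrow> 'a::euclidean_space"
  assumes cont: "continuous_on UNIV k" and int: "\<And>u. k integrable_on {u..}"
  shows "((\<lambda>u. integral {u..} k) has_vector_derivative - k t) (at t)"
proof -
  define a where "a = t - 1"
  define b where "b = t + 1"
  have iab: "k integrable_on {a..b}"
    by (rule integrable_continuous_interval[OF continuous_on_subset[OF cont]]) simp
  have at: "at t within {a..b} = at t" by (rule at_within_Icc_at) (auto simp: a_def b_def)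
  have "((\<lambda>u. integral {a..u} k) has_vector_derivative k t) (at t within {a..b})"
    by (rule integral_has_vector_derivative[OF continuous_on_subset[OF cont]]) (auto simp: a_def b_def)
  then have "((\<lambda>u. (integral {b..} k + integral {a..b} k) - integral {a..u} k) has_vector_derivative 0 - k t) (at t)"
    unfolding at by (intro has_vector_derivative_diff has_vector_derivative_const)
  then have "((\<lambda>u. (integral {b..} k + integral {a..b} k) - integral {a..u} k) has_vector_derivative - k t) (at t)"
    by simp
  then show ?thesis
  proof (rule has_vector_derivative_transform_within_open)
    show "open {a<..<b}" by simp
    show "t \<in> {a<..<b}" by (auto simp: a_def b_def)
    fix y assume y: "y \<in> {a<..<b}"
    have "integral {a..y} k + integral {y..b} k = integral {a..b} k"
      by (rule Henstock_Kurzweil_Integration.integral_combine[OF _ _ iab]) (use y in auto)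
    then show "(integral {b..} k + integral {a..b} k) - integral {a..y} k = integral {y..} k"
      using split_upper[OF cont int, of y b] y by (simp add: algebra_simps)
  qed
qed

context dich begin

definition kP where "kP G s = P 0 *v (T 0 s *v G s)"
definition kQ where "kQ G s = (mat 1 - P 0) *v (T 0 s *v G s)"
definition Gam where "Gam G t = T t 0 *v (integral {..t} (kP G) - integral {t..} (kQ G))"
definition adm where "adm c G \<longleftrightarrow> c \<ge> 0 \<and> continuous_on UNIV G \<and> (\<forall>s. norm (G s) \<le> c * mu' s / mu s)"

lemma kP_cont: "continuous_on UNIV G \<Longrightarrow> continuous_on UNIV (kP G)"
  unfolding kP_def by (rule bounded_linear.continuous_on[OF matrix_vector_mul_bounded_linear Tv_cont])

lemma kQ_cont: "continuous_on UNIV G \<Longrightarrow> continuous_on UNIV (kQ G)"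
  unfolding kQ_def by (rule bounded_linear.continuous_on[OF matrix_vector_mul_bounded_linear Tv_cont])

lemma back_bound: "norm y \<le> exp (MA * \<bar>t\<bar>) * norm (T t 0 *v y)"
proof -
  have "y = T 0 t *v (T t 0 *v y)" by (simp add: cocycle T_id)
  then have "norm y = norm (T 0 t *v (T t 0 *v y))" by simp
  also have "\<dots> \<le> exp (MA * \<bar>0 - t\<bar>) * norm (T t 0 *v y)" by (rule T_bound)
  finally show ?thesis by simp
qed

lemma kP_bound:
  assumes "adm c G" "s \<le> t"
  shows "norm (T t 0 *v kP G s) \<le> K * c * mu t powr (-\<alpha>) * wP s"
proof -
  have "T t 0 *v kP G s = (T t s ** P s) *v G s"
    unfolding kP_def by (simp add: P_rel[symmetric] cocycle matrix_vector_mul_assoc[symmetric])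
  then have "norm (T t 0 *v kP G s) \<le> opnorm (T t s ** P s) * norm (G s)"
    using opn by simp
  also have "\<dots> \<le> (K * (mu t / mu s) powr (-\<alpha>)) * (c * mu' s / mu s)"
    using assms K_pos unfolding adm_def by (intro mult_mono dich_P) auto
  also have "\<dots> = K * c * ((mu t / mu s) powr (-\<alpha>) * (mu' s / mu s))" by simp
  also have "\<dots> = K * c * mu t powr (-\<alpha>) * wP s" by (subst wP_eq) (simp only: mult.assoc)
  finally show ?thesis .
qed

lemma kQ_bound:
  assumes "adm c G" "t \<le> s"
  shows "norm (T t 0 *v kQ G s) \<le> K * c * mu t powr \<alpha> * wQ s"
proof -
  have "T t 0 *v kQ G s = (T t s ** (mat 1 - P s)) *v G s"
    unfolding kQ_def by (simp add: Q_rel[symmetric] cocycle matrix_vector_mul_assoc[symmetric])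
  then have "norm (T t 0 *v kQ G s) \<le> opnorm (T t s ** (mat 1 - P s)) * norm (G s)"
    using opn by simp
  also have "\<dots> \<le> (K * (mu s / mu t) powr (-\<alpha>)) * (c * mu' s / mu s)"
    using assms K_pos unfolding adm_def by (intro mult_mono dich_Q) auto
  also have "\<dots> = K * c * ((mu s / mu t) powr (-\<alpha>) * (mu' s / mu s))" by simp
  also have "\<dots> = K * c * mu t powr \<alpha> * wQ s" by (subst wQ_eq) (simp only: mult.assoc)
  finally show ?thesis .
qed

lemma leb: "{..(t::real)} \<in> sets lebesgue" "{t..} \<in> sets lebesgue"
  using atMost_borel[of t] atLeast_borel[of t] by (auto intro!: sets_completionI_sets)

end


context dich begin

lemma adm_cont: "adm c G \<Longrightarrow> continuous_on UNIV G" unfolding adm_def by blast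

lemma Tk_cont: "continuous_on UNIV k \<Longrightarrow> continuous_on S (\<lambda>s. T t 0 *v k s)"
  by (rule continuous_on_subset[OF bounded_linear.continuous_on[OF matrix_vector_mul_bounded_linear]]) auto

lemma kP_int:
  assumes "adm c G"
  shows "kP G integrable_on {..t}"
proof (rule measurable_bounded_by_integrable_imp_integrable)
  show "kP G \<in> borel_measurable (lebesgue_on {..t})"
    by (rule continuous_imp_measurable_on_sets_lebesgue[OF continuous_on_subset[OF kP_cont[OF adm_cont[OF assms]]] leb(1)]) simp
  show "{..t} \<in> sets lebesgue" by (rule leb)
  have "((\<lambda>s. (exp (MA * \<bar>t\<bar>) * (K * c * mu t powr (-\<alpha>))) *\<^sub>R wP s) has_integral
        (exp (MA * \<bar>t\<bar>) * (K * c * mu t powr (-\<alpha>))) *\<^sub>R (mu t powr \<alpha> / \<alpha>)) {..t}"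
    by (rule has_integral_cmul[OF intP])
  then show "(\<lambda>s. (exp (MA * \<bar>t\<bar>) * (K * c * mu t powr (-\<alpha>))) * wP s) integrable_on {..t}"
    by (auto simp: integrable_on_def)
  fix s assume "s \<in> {..t}"
  then have "norm (T t 0 *v kP G s) \<le> K * c * mu t powr (-\<alpha>) * wP s"
    using kP_bound[OF assms] by simp
  then have "exp (MA * \<bar>t\<bar>) * norm (T t 0 *v kP G s) \<le> exp (MA * \<bar>t\<bar>) * (K * c * mu t powr (-\<alpha>) * wP s)"
    by (rule mult_left_mono) simp
  then have "norm (kP G s) \<le> exp (MA * \<bar>t\<bar>) * (K * c * mu t powr (-\<alpha>) * wP s)"
    by (rule order_trans[OF back_bound])
  then show "norm (kP G s) \<le> (exp (MA * \<bar>t\<bar>) * (K * c * mu t powr (-\<alpha>))) * wP s"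
    by (simp add: mult.assoc)
qed

lemma kQ_int:
  assumes "adm c G"
  shows "kQ G integrable_on {t..}"
proof (rule measurable_bounded_by_integrable_imp_integrable)
  show "kQ G \<in> borel_measurable (lebesgue_on {t..})"
    by (rule continuous_imp_measurable_on_sets_lebesgue[OF continuous_on_subset[OF kQ_cont[OF adm_cont[OF assms]]] leb(2)]) simp
  show "{t..} \<in> sets lebesgue" by (rule leb)
  have "((\<lambda>s. (exp (MA * \<bar>t\<bar>) * (K * c * mu t powr \<alpha>)) *\<^sub>R wQ s) has_integral
        (exp (MA * \<bar>t\<bar>) * (K * c * mu t powr \<alpha>)) *\<^sub>R (mu t powr (-\<alpha>) / \<alpha>)) {t..}"
    by (rule has_integral_cmul[OF intQ])
  then show "(\<lambda>s. (exp (MA * \<bar>t\<bar>) * (K * c * mu t powr \<alpha>)) * wQ s) integrable_on {t..}"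
    by (auto simp: integrable_on_def)
  fix s assume "s \<in> {t..}"
  then have "norm (T t 0 *v kQ G s) \<le> K * c * mu t powr \<alpha> * wQ s"
    using kQ_bound[OF assms] by simp
  then have "exp (MA * \<bar>t\<bar>) * norm (T t 0 *v kQ G s) \<le> exp (MA * \<bar>t\<bar>) * (K * c * mu t powr \<alpha> * wQ s)"
    by (rule mult_left_mono) simp
  then have "norm (kQ G s) \<le> exp (MA * \<bar>t\<bar>) * (K * c * mu t powr \<alpha> * wQ s)"
    by (rule order_trans[OF back_bound])
  then show "norm (kQ G s) \<le> (exp (MA * \<bar>t\<bar>) * (K * c * mu t powr \<alpha>)) * wQ s"
    by (simp add: mult.assoc)
qed

lemma Gam_alt:
  assumes "adm c G"
  shows "Gam G t = integral {..t} (\<lambda>s. T t 0 *v kP G s) - integral {t..} (\<lambda>s. T t 0 *v kQ G s)"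
proof -
  have "integral {..t} ((\<lambda>x. T t 0 *v x) \<circ> kP G) = T t 0 *v integral {..t} (kP G)"
    by (rule integral_linear[OF kP_int[OF assms] matrix_vector_mul_bounded_linear])
  moreover have "integral {t..} ((\<lambda>x. T t 0 *v x) \<circ> kQ G) = T t 0 *v integral {t..} (kQ G)"
    by (rule integral_linear[OF kQ_int[OF assms] matrix_vector_mul_bounded_linear])
  ultimately show ?thesis
    unfolding Gam_def by (simp add: o_def matrix_vector_mult_diff_distrib)
qed

lemma Gam_bound:
  assumes "adm c G"
  shows "norm (Gam G t) \<le> 2 * K * c / \<alpha>"
proof -
  have c0: "c \<ge> 0" using assms unfolding adm_def by blast
  have one: "mu t powr (-\<alpha>) * mu t powr \<alpha> = 1"
    using mu_pos[of t] by (simp add: powr_minus)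
  have n1: "norm (integral {..t} (\<lambda>s. T t 0 *v kP G s)) \<le> (K * c * mu t powr (-\<alpha>)) *\<^sub>R (mu t powr \<alpha> / \<alpha>)"
  proof (rule integral_norm_bound_integral')
    show "norm (T t 0 *v kP G s) \<le> (K * c * mu t powr (-\<alpha>)) *\<^sub>R wP s" if "s \<in> {..t}" for s
      using kP_bound[OF assms, of s t] that by simp
    show "(\<lambda>s. T t 0 *v kP G s) \<in> borel_measurable (lebesgue_on {..t})"
      by (rule continuous_imp_measurable_on_sets_lebesgue[OF Tk_cont[OF kP_cont[OF adm_cont[OF assms]]] leb(1)])
    show "{..t} \<in> sets lebesgue" by (rule leb)
    show "((\<lambda>s. (K * c * mu t powr (-\<alpha>)) *\<^sub>R wP s) has_integral (K * c * mu t powr (-\<alpha>)) *\<^sub>R (mu t powr \<alpha> / \<alpha>)) {..t}"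
      by (rule has_integral_cmul[OF intP])
  qed
  have n2: "norm (integral {t..} (\<lambda>s. T t 0 *v kQ G s)) \<le> (K * c * mu t powr \<alpha>) *\<^sub>R (mu t powr (-\<alpha>) / \<alpha>)"
  proof (rule integral_norm_bound_integral')
    show "norm (T t 0 *v kQ G s) \<le> (K * c * mu t powr \<alpha>) *\<^sub>R wQ s" if "s \<in> {t..}" for s
      using kQ_bound[OF assms, of t s] that by simp
    show "(\<lambda>s. T t 0 *v kQ G s) \<in> borel_measurable (lebesgue_on {t..})"
      by (rule continuous_imp_measurable_on_sets_lebesgue[OF Tk_cont[OF kQ_cont[OF adm_cont[OF assms]]] leb(2)])
    show "{t..} \<in> sets lebesgue" by (rule leb)
    show "((\<lambda>s. (K * c * mu t powr \<alpha>) *\<^sub>R wQ s) has_integral (K * c * mu t powr \<alpha>) *\<^sub>R (mu t powr (-\<alpha>) / \<alpha>)) {t..}"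
      by (rule has_integral_cmul[OF intQ])
  qed
  have e1: "(K * c * mu t powr (-\<alpha>)) *\<^sub>R (mu t powr \<alpha> / \<alpha>) = K * c / \<alpha>"
    using one by (simp add: field_simps)
  have e2: "(K * c * mu t powr \<alpha>) *\<^sub>R (mu t powr (-\<alpha>) / \<alpha>) = K * c / \<alpha>"
    using one by (simp add: field_simps)
  have "norm (Gam G t) \<le> norm (integral {..t} (\<lambda>s. T t 0 *v kP G s)) + norm (integral {t..} (\<lambda>s. T t 0 *v kQ G s))"
    unfolding Gam_alt[OF assms] by (rule norm_triangle_ineq4)
  also have "\<dots> \<le> K * c / \<alpha> + K * c / \<alpha>" using n1 n2 e1 e2 by linarith
  finally show ?thesis by simp
qed

lemma Gam_deriv:
  assumes "adm c G"
  shows "(Gam G has_vector_derivative (A t *v Gam G t + G t)) (at t)"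
proof -
  let ?I = "\<lambda>u. integral {..u} (kP G) - integral {u..} (kQ G)"
  have Id: "(?I has_vector_derivative (kP G t - - kQ G t)) (at t)"
    by (intro has_vector_derivative_diff IP_deriv IQ_deriv kP_cont kQ_cont adm_cont[OF assms]
        kP_int[OF assms] kQ_int[OF assms])
  have Td: "((\<lambda>u. T u 0) has_vector_derivative (A t ** T t 0)) (at t)" by (rule T_deriv)
  have "((\<lambda>u. T u 0 *v ?I u) has_vector_derivative
        (T t 0 *v (kP G t - - kQ G t) + (A t ** T t 0) *v ?I t)) (at t)"
    using bounded_bilinear.has_vector_derivative[OF bb_mv Td Id] by simp
  moreover have "kP G t - - kQ G t = T 0 t *v G t"
    unfolding kP_def kQ_def by (simp add: matrix_vector_mult_diff_rdistrib)
  moreover have "T t 0 *v (T 0 t *v G t) = G t" by (simp add: cocycle T_id)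
  moreover have "(A t ** T t 0) *v ?I t = A t *v Gam G t"
    unfolding Gam_def by (simp add: matrix_vector_mul_assoc)
  ultimately show ?thesis
    unfolding Gam_def[abs_def] by (simp add: add.commute)
qed

lemma Gam_diff:
  assumes "adm c1 G1" "adm c2 G2"
  shows "Gam G1 t - Gam G2 t = Gam (\<lambda>s. G1 s - G2 s) t"
proof -
  have "kP (\<lambda>s. G1 s - G2 s) = (\<lambda>s. kP G1 s - kP G2 s)"
    unfolding kP_def by (simp add: matrix_vector_mult_diff_distrib)
  moreover have "kQ (\<lambda>s. G1 s - G2 s) = (\<lambda>s. kQ G1 s - kQ G2 s)"
    unfolding kQ_def by (simp add: matrix_vector_mult_diff_distrib)
  ultimately show ?thesis
    unfolding Gam_def
    by (simp add: integral_diff kP_int[OF assms(1)] kQ_int[OF assms(1)] kP_int[OF assms(2)] kQ_int[OF assms(2)] matrix_vector_mult_diff_distrib algebra_simps)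
qed

end



context dich begin

lemma hom_bdd_zero:
  assumes hs: "hsol x" and bd: "\<And>t. norm (x t) \<le> B"
  shows "x t = 0"
proof -
  have xt: "x s = T s 0 *v x 0" for s
  proof -
    have "hsol (\<lambda>s. x s - T s 0 *v x 0)" by (intro hsol_diff hs Tv_sol)
    moreover have "x 0 - T 0 0 *v x 0 = 0" by (simp add: T_id)
    ultimately have "x s - T s 0 *v x 0 = 0" using hsol_zero by blast
    then show ?thesis by simp
  qed
  have B0: "B \<ge> 0" using bd[of 0] norm_ge_zero[of "x 0"] by linarith
  have back0: "T 0 s *v x s = x 0" for s
  proof -
    have "T 0 s *v x s = T 0 s *v (T s 0 *v x 0)" by (simp only: xt[of s])
    also have "\<dots> = T 0 0 *v x 0" by (rule cocycle)
    also have "\<dots> = x 0" by (simp add: T_id)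
    finally show ?thesis .
  qed
  have Pz: "norm (P 0 *v x 0) \<le> 0"
  proof (rule tendsto_lowerbound)
    show "((\<lambda>s. K * mu s powr \<alpha> * B) \<longlongrightarrow> 0) at_bot"
      using tendsto_mult_right_zero[OF tendsto_mult_left_zero[OF lim_bot], of K B] by (simp add: mult.assoc)
    show "\<forall>\<^sub>F s in at_bot. norm (P 0 *v x 0) \<le> K * mu s powr \<alpha> * B"
    proof (rule eventually_mono[OF eventually_le_at_bot[of 0]])
      fix s :: real assume s: "s \<le> 0"
      have "(T 0 s ** P s) *v x s = T 0 s *v (P s *v x s)" by (rule matrix_vector_mul_assoc[symmetric])
      also have "\<dots> = P 0 *v (T 0 s *v x s)" by (rule P_rel)
      also have "\<dots> = P 0 *v x 0" by (simp only: back0)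
      finally have "P 0 *v x 0 = (T 0 s ** P s) *v x s" by simp
      then have "norm (P 0 *v x 0) \<le> opnorm (T 0 s ** P s) * norm (x s)" using opn by simp
      also have "\<dots> \<le> (K * (mu 0 / mu s) powr (-\<alpha>)) * B"
        using s K_pos by (intro mult_mono dich_P bd) auto
      also have "(mu 0 / mu s) powr (-\<alpha>) = mu s powr \<alpha>"
        using mu_pos[of s] by (simp add: mu_0 powr_divide powr_minus)
      finally show "norm (P 0 *v x 0) \<le> K * mu s powr \<alpha> * B" by simp
    qed
  qed simp
  have Qz: "norm ((mat 1 - P 0) *v x 0) \<le> 0"
  proof (rule tendsto_lowerbound)
    show "((\<lambda>s. K * mu s powr (-\<alpha>) * B) \<longlongrightarrow> 0) at_top"
      using tendsto_mult_right_zero[OF tendsto_mult_left_zero[OF lim_top], of K B] by (simp add: mult.assoc)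
    show "\<forall>\<^sub>F s in at_top. norm ((mat 1 - P 0) *v x 0) \<le> K * mu s powr (-\<alpha>) * B"
    proof (rule eventually_mono[OF eventually_ge_at_top[of 0]])
      fix s :: real assume s: "0 \<le> s"
      have "(T 0 s ** (mat 1 - P s)) *v x s = T 0 s *v ((mat 1 - P s) *v x s)" by (rule matrix_vector_mul_assoc[symmetric])
      also have "\<dots> = (mat 1 - P 0) *v (T 0 s *v x s)" by (rule Q_rel)
      also have "\<dots> = (mat 1 - P 0) *v x 0" by (simp only: back0)
      finally have "(mat 1 - P 0) *v x 0 = (T 0 s ** (mat 1 - P s)) *v x s" by simp
      then have "norm ((mat 1 - P 0) *v x 0) \<le> opnorm (T 0 s ** (mat 1 - P s)) * norm (x s)" using opn by simp
      also have "\<dots> \<le> (K * (mu s / mu 0) powr (-\<alpha>)) * B"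
        using s K_pos by (intro mult_mono dich_Q bd) auto
      finally show "norm ((mat 1 - P 0) *v x 0) \<le> K * mu s powr (-\<alpha>) * B" by (simp add: mu_0)
    qed
  qed simp
  have "x 0 = P 0 *v x 0 + (mat 1 - P 0) *v x 0"
    by (simp add: matrix_vector_mult_diff_rdistrib)
  then have "x 0 = 0" using Pz Qz by simp
  then show ?thesis using xt[of t] by simp
qed

end





theorem lemma3p3:
  fixes A :: "real \<Rightarrow> real^'n^'n"
    and T :: "real \<Rightarrow> real \<Rightarrow> real^'n^'n"
    and P :: "real \<Rightarrow> real^'n^'n"
    and mu mu' :: "real \<Rightarrow> real"
    and f :: "real \<Rightarrow> real^'n \<Rightarrow> real^'n"
    and K \<alpha> \<beta> \<gamma> :: real
  assumes A_cont: "continuous_on UNIV A"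
    and A_bdd: "bounded (range A)"
    and T_id: "\<And>s. T s s = mat 1"
    and T_deriv: "\<And>t s. ((\<lambda>t. T t s) has_vector_derivative (A t ** T t s)) (at t)"
    and mu_pos: "\<And>t. mu t > 0"
    and mu_mono: "mono mu"
    and mu_deriv: "\<And>t. (mu has_real_derivative mu' t) (at t)"
    and mu_0: "mu 0 = 1"
    and mu_bot: "(mu \<longlongrightarrow> 0) at_bot"
    and mu_top: "filterlim mu at_top at_top"
    and P_proj: "\<And>s. P s ** P s = P s"
    and K_pos: "K > 0" and alpha_pos: "\<alpha> > 0"
    and P_comm: "\<And>t s. T t s ** P s = P t ** T t s"
    and dich_P: "\<And>t s. t \<ge> s \<Longrightarrow> opnorm (T t s ** P s) \<le> K * (mu t / mu s) powr (-\<alpha>)"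
    and dich_Q: "\<And>t s. t \<le> s \<Longrightarrow> opnorm (T t s ** (mat 1 - P s)) \<le> K * (mu s / mu t) powr (-\<alpha>)"
    and f_cont: "continuous_on UNIV (\<lambda>(t, x). f t x)"
    and beta_nn: "\<beta> \<ge> 0" and gamma_nn: "\<gamma> \<ge> 0"
    and f_bdd: "\<And>t x. norm (f t x) \<le> \<beta> * mu' t / mu t"
    and f_lip: "\<And>t x1 x2. norm (f t x1 - f t x2) \<le> \<gamma> * mu' t / mu t * norm (x1 - x2)"
    and small: "6 * K * \<gamma> / \<alpha> < 1"
  shows "\<forall>\<tau> (\<xi>::real^'n). \<exists>g.
           (\<forall>t. (g has_vector_derivative (A t *v g t + f t (T t \<tau> *v \<xi> + g t))) (at t))
         \<and> bounded (range g)
         \<and> (\<forall>t. norm (g t) \<le> 2 * K * \<beta> / \<alpha>)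
         \<and> (\<forall>h. (\<forall>t. (h has_vector_derivative (A t *v h t + f t (T t \<tau> *v \<xi> + h t))) (at t))
                \<and> bounded (range h) \<longrightarrow> h = g)"
proof (intro allI)
  fix \<tau> :: real and \<xi> :: "real^'n"
  interpret D: dich A T P mu mu' K \<alpha>
    by unfold_locales (fact A_bdd T_id T_deriv mu_pos mu_mono mu_deriv mu_0 mu_bot mu_top K_pos alpha_pos P_comm dich_P dich_Q)+
  define y where "y t = T t \<tau> *v \<xi>" for t
  have y_cont: "continuous_on UNIV y"
    unfolding y_def by (intro continuous_at_imp_continuous_on ballI D.Tcont_fixed)
  define F where "F g s = f s (y s + g s)" for g :: "real \<Rightarrow> real^'n" and s
  have F_cont: "continuous_on UNIV (F g)" if "continuous_on UNIV g" for g
  proof -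
    have "continuous_on UNIV (\<lambda>s. (\<lambda>(t, x). f t x) (s, y s + g s))"
      by (rule continuous_on_compose2[OF f_cont]) (auto intro!: continuous_intros y_cont that)
    then show ?thesis unfolding F_def by simp
  qed
  have F_adm: "D.adm \<beta> (F g)" if "continuous_on UNIV g" for g
    unfolding D.adm_def using beta_nn F_cont[OF that] f_bdd unfolding F_def by blast
  have F_lip: "D.adm (\<gamma> * d) (\<lambda>s. F g1 s - F g2 s)"
    if "continuous_on UNIV g1" "continuous_on UNIV g2" "\<And>s. norm (g1 s - g2 s) \<le> d" "d \<ge> 0" for g1 g2 d
    unfolding D.adm_def
  proof (intro conjI allI)
    show "0 \<le> \<gamma> * d" using gamma_nn that(4) by simp
    show "continuous_on UNIV (\<lambda>s. F g1 s - F g2 s)"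
      by (intro continuous_intros F_cont that)
    fix s
    have w0: "\<gamma> * mu' s / mu s \<ge> 0" using gamma_nn D.mu'_nn[of s] mu_pos[of s] by simp
    have "norm (F g1 s - F g2 s) \<le> \<gamma> * mu' s / mu s * norm ((y s + g1 s) - (y s + g2 s))"
      unfolding F_def by (rule f_lip)
    also have "\<dots> \<le> \<gamma> * mu' s / mu s * d"
      using that(3)[of s] w0 by (intro mult_left_mono) auto
    finally show "norm (F g1 s - F g2 s) \<le> \<gamma> * d * mu' s / mu s" by (simp add: mult_ac)
  qed
  have Gam_cont: "continuous_on UNIV (D.Gam G)" if "D.adm c G" for c G
    by (intro continuous_at_imp_continuous_on ballI has_vector_derivative_continuous[OF D.Gam_deriv[OF that]])
  have Gam_mem: "D.Gam (F g) \<in> bcontfun" if "continuous_on UNIV g" for g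
    by (rule bcontfun_normI[OF Gam_cont[OF F_adm[OF that]] D.Gam_bound[OF F_adm[OF that]]])
  define S where "S g = Bcontfun (D.Gam (F (apply_bcontfun g)))" for g :: "real \<Rightarrow>\<^sub>C (real^'n)"
  have S_app: "apply_bcontfun (S g) = D.Gam (F (apply_bcontfun g))" for g
    unfolding S_def by (rule Bcontfun_inverse[OF Gam_mem]) simp
  define c where "c = 2 * K * \<gamma> / \<alpha>"
  have c0: "0 \<le> c" unfolding c_def using K_pos gamma_nn alpha_pos by simp
  have c1: "c < 1"
  proof -
    have "2 * K * \<gamma> / \<alpha> \<le> 6 * K * \<gamma> / \<alpha>"
      using K_pos gamma_nn alpha_pos by (intro divide_right_mono mult_right_mono) auto
    then show ?thesis unfolding c_def using small by linarith
  qed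
  have contr: "\<forall>g1 g2. dist (S g1) (S g2) \<le> c * dist g1 g2"
  proof (intro allI dist_bound)
    fix g1 g2 :: "real \<Rightarrow>\<^sub>C (real^'n)" and t :: real
    have nd: "norm (apply_bcontfun g1 s - apply_bcontfun g2 s) \<le> dist g1 g2" for s
      using dist_bounded[of g1 s g2] by (simp add: dist_norm)
    have ad: "D.adm (\<gamma> * dist g1 g2) (\<lambda>s. F g1 s - F g2 s)"
      by (rule F_lip) (auto intro: nd)
    have "dist (S g1 t) (S g2 t) = norm (D.Gam (F g1) t - D.Gam (F g2) t)"
      by (simp add: S_app dist_norm)
    also have "\<dots> = norm (D.Gam (\<lambda>s. F g1 s - F g2 s) t)"
      by (simp add: D.Gam_diff[OF F_adm F_adm])
    also have "\<dots> \<le> 2 * K * (\<gamma> * dist g1 g2) / \<alpha>"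
      by (rule D.Gam_bound[OF ad])
    also have "\<dots> = c * dist g1 g2" unfolding c_def by simp
    finally show "dist (S g1 t) (S g2 t) \<le> c * dist g1 g2" .
  qed
  obtain g0 where g0: "S g0 = g0" and g0u: "\<And>g. S g = g \<Longrightarrow> g = g0"
    using banach_fix_type[OF c0 c1 contr] by blast
  define g where "g = apply_bcontfun g0"
  have geq: "D.Gam (F g) = g"
    unfolding g_def using arg_cong[OF g0, of apply_bcontfun] by (simp add: S_app)
  have gadm: "D.adm \<beta> (F g)" unfolding g_def by (rule F_adm) simp
  show "\<exists>g. (\<forall>t. (g has_vector_derivative (A t *v g t + f t (T t \<tau> *v \<xi> + g t))) (at t))
         \<and> bounded (range g)
         \<and> (\<forall>t. norm (g t) \<le> 2 * K * \<beta> / \<alpha>)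
         \<and> (\<forall>h. (\<forall>t. (h has_vector_derivative (A t *v h t + f t (T t \<tau> *v \<xi> + h t))) (at t))
                \<and> bounded (range h) \<longrightarrow> h = g)"
  proof (intro exI conjI allI impI)
    fix t
    show "(g has_vector_derivative (A t *v g t + f t (T t \<tau> *v \<xi> + g t))) (at t)"
      using D.Gam_deriv[OF gadm, of t] unfolding geq by (simp add: F_def y_def)
  next
    show "bounded (range g)" unfolding g_def by simp
  next
    fix t
    show "norm (g t) \<le> 2 * K * \<beta> / \<alpha>"
      using D.Gam_bound[OF gadm, of t] unfolding geq .
  next
    fix h
    assume "(\<forall>t. (h has_vector_derivative (A t *v h t + f t (T t \<tau> *v \<xi> + h t))) (at t)) \<and> bounded (range h)"
    then have hd: "\<And>t. (h has_vector_derivative (A t *v h t + F h t)) (at t)" and hb: "bounded (range h)"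
      by (auto simp: F_def y_def)
    have hc: "continuous_on UNIV h"
      by (intro continuous_at_imp_continuous_on ballI has_vector_derivative_continuous[OF hd])
    obtain B where B: "\<And>t. norm (h t) \<le> B" using hb by (auto simp: bounded_iff)
    have hadm: "D.adm \<beta> (F h)" by (rule F_adm[OF hc])
    have hs: "D.hsol (\<lambda>t. h t - D.Gam (F h) t)"
      unfolding D.hsol_def
    proof
      fix t
      have "((\<lambda>t. h t - D.Gam (F h) t) has_vector_derivative
             (A t *v h t + F h t) - (A t *v D.Gam (F h) t + F h t)) (at t)"
        by (rule has_vector_derivative_diff[OF hd D.Gam_deriv[OF hadm]])
      then show "((\<lambda>t. h t - D.Gam (F h) t) has_vector_derivative A t *v (h t - D.Gam (F h) t)) (at t)"
        by (simp add: matrix_vector_mult_diff_distrib)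
    qed
    have wb: "norm (h t - D.Gam (F h) t) \<le> B + 2 * K * \<beta> / \<alpha>" for t
      using norm_triangle_ineq4[of "h t" "D.Gam (F h) t"] B[of t] D.Gam_bound[OF hadm, of t] by linarith
    have heq: "D.Gam (F h) = h"
    proof
      fix t show "D.Gam (F h) t = h t" using D.hom_bdd_zero[OF hs wb, of t] by simp
    qed
    have hmem: "h \<in> bcontfun" unfolding bcontfun_def using hc hb by simp
    have "S (Bcontfun h) = Bcontfun h"
      unfolding S_def by (simp add: Bcontfun_inverse[OF hmem] heq)
    then have "Bcontfun h = g0" by (rule g0u)
    then show "h = g" unfolding g_def using Bcontfun_inverse[OF hmem] by metis
  qed
qed


end
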